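(* Let $c<0$, $k>0$ and $R>0$, and let $f(x)=\sum_{n=0}^\infty b_nx^n$ with $b_n=\frac{(-c/4)^n}{n!\,(k,n)}$ (a series converging for all real $x$). Then: (1) $t\mapsto\log f(Re^{-t})$ is convex on $(0,\infty)$, so that $f(\sqrt{xy})\le\sqrt{f(x)f(y)}$ for all $x,y\in(0,\infty)$, with equality if and only if $x=y$. (2) $\log f(x)$ is concave on $(0,\infty)$, so that $\sqrt{f(x)f(y)}\le f((x+y)/2)$ for all $x,y\in(0,\infty)$, with equality if and only if $x=y$. (3) $f$ is convex on $(0,\infty)$, so that $f((x+y)/2)\le\frac12(f(x)+f(y))$ for all $x,y\in(0,\infty)$, with equality if and only if $x=y$. (4) If $k>-1-cR/4$, then $t\mapsto f(R(1-e^{-t}))$ is concave on $(0,\infty)$, so that $\frac{f(x)+f(y)}{2}\le f\big(R-\sqrt{(R-x)(R-y)}\big)$ for all $x,y\in(0,R)$, with equality if and only if $x=y$.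
   Context: $(k,0)=1$ and $(k,n)=k(k+1)\cdots(k+n-1)$ for $n\ge1$. The function $f$ is the generalized-normalized Bessel function of the first kind of order $p$, with $k=p+(b+1)/2$ for real parameters $p,b$. *)

theory Defs
  imports "HOL-Analysis.Analysis"
begin

definition bcoef :: "real \<Rightarrow> real \<Rightarrow> nat \<Rightarrow> real" where
  "bcoef c k n = (- c / 4) ^ n / (fact n * pochhammer k n)"

definition gnbessel :: "real \<Rightarrow> real \<Rightarrow> real \<Rightarrow> real" where
  "gnbessel c k x = (\<Sum>n. bcoef c k n * x ^ n)"

end

theory Submission
  imports Defs
begin

lemma strict_convex_deriv:
  fixes g g' :: "real \<Rightarrow> real" and A :: "real set"
  assumes A: "connected A"
    and d: "\<And>x. x \<in> A \<Longrightarrow> (g has_real_derivative g' x) (at x)"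
    and mono: "\<And>x y. x \<in> A \<Longrightarrow> y \<in> A \<Longrightarrow> x < y \<Longrightarrow> g' x < g' y"
  shows "convex_on A g" "\<And>x y. x \<in> A \<Longrightarrow> y \<in> A \<Longrightarrow> x < y \<Longrightarrow> 2 * g ((x+y)/2) < g x + g y"
proof -
  show "convex_on A g"
    by (rule convex_on_realI[OF A d]) (use mono in \<open>force simp: le_less\<close>)+
next
  fix x y assume xy: "x \<in> A" "y \<in> A" "x < y"
  define z where "z = (x+y)/2"
  have ivl: "{x..y} \<subseteq> A" using A xy connected_contains_Icc by blast
  have xz: "x < z" "z < y" using xy by (auto simp: z_def)
  have "\<exists>\<xi>. \<xi> > x \<and> \<xi> < z \<and> g z - g x = (z - x) * g' \<xi>"
    using xz ivl by (intro MVT2) (auto intro!: d)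
  then obtain \<xi> where \<xi>: "\<xi> > x" "\<xi> < z" "g z - g x = (z - x) * g' \<xi>" by auto
  have "\<exists>\<eta>. \<eta> > z \<and> \<eta> < y \<and> g y - g z = (y - z) * g' \<eta>"
    using xz ivl by (intro MVT2) (auto intro!: d)
  then obtain \<eta> where \<eta>: "\<eta> > z" "\<eta> < y" "g y - g z = (y - z) * g' \<eta>" by auto
  have "g' \<xi> < g' \<eta>" using \<xi> \<eta> ivl by (intro mono) auto
  moreover have "y - z = z - x" "z - x > 0" using xy by (auto simp: z_def field_simps)
  ultimately have "g z - g x < g y - g z" using \<xi>(3) \<eta>(3) by simp
  then show "2 * g ((x+y)/2) < g x + g y" by (simp add: z_def)
qed

lemma cheb:
  fixes w h :: "nat \<Rightarrow> real" and x y :: real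
  assumes w: "\<And>n. w n \<ge> 0" "w 0 > 0" "w 1 > 0"
    and h: "\<And>m n. m \<le> n \<Longrightarrow> h m \<le> h n" "h 0 < h 1"
    and sF: "\<And>z. summable (\<lambda>n. w n * z^n)"
    and sH: "\<And>z. summable (\<lambda>n. w n * h n * z^n)"
    and xy: "0 < x" "x < y"
  shows "(\<Sum>n. w n * h n * x^n) * (\<Sum>n. w n * y^n) < (\<Sum>n. w n * h n * y^n) * (\<Sum>n. w n * x^n)"
proof -
  define T where "T n m = w n * w m * h n * (y^n * x^m - x^n * y^m)" for n m
  define S where "S n m = w n * w m * (h n - h m) * (y^n * x^m - x^n * y^m)" for n m
  define \<delta> where "\<delta> = w 0 * w 1 * (h 1 - h 0) * (y - x)"
  have \<delta>: "\<delta> > 0" using w h xy by (simp add: \<delta>_def)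
  have Snn: "S n m \<ge> 0" for n m
  proof (cases "m \<le> n")
    case True
    have "x^(n-m) \<le> y^(n-m)" using xy by (intro power_mono) auto
    hence "x^m * y^m * x^(n-m) \<le> x^m * y^m * y^(n-m)" using xy by (intro mult_left_mono) auto
    hence "x^n * y^m \<le> y^n * x^m" using True
      by (metis (no_types, lifting) le_add_diff_inverse mult.assoc mult.commute power_add)
    then show ?thesis using True w h unfolding S_def by (intro mult_nonneg_nonneg) auto
  next
    case False
    have "x^(m-n) \<le> y^(m-n)" using xy by (intro power_mono) auto
    hence "x^n * y^n * x^(m-n) \<le> x^n * y^n * y^(m-n)" using xy by (intro mult_left_mono) auto
    hence "y^n * x^m \<le> x^n * y^m" using False
      by (metis (no_types, lifting) le_add_diff_inverse nat_le_linear mult.assoc mult.commute power_add)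
    moreover have "h n \<le> h m" using False h by auto
    ultimately have "0 \<le> w n * w m * ((h m - h n) * (x^n * y^m - y^n * x^m))" using w
      by (intro mult_nonneg_nonneg) auto
    then show ?thesis unfolding S_def by (simp add: algebra_simps)
  qed
  define D where "D N = (\<Sum>n<N. w n * h n * y^n) * (\<Sum>m<N. w m * x^m) - (\<Sum>n<N. w n * h n * x^n) * (\<Sum>m<N. w m * y^m)" for N
  have DT: "D N = (\<Sum>n<N. \<Sum>m<N. T n m)" for N
    unfolding D_def T_def sum_product by (simp add: algebra_simps sum_subtractf sum.distrib)
  have "2 * D N = (\<Sum>n<N. \<Sum>m<N. T n m) + (\<Sum>m<N. \<Sum>n<N. T n m)" for N
    using DT[of N] sum.swap[of T "{..<N}" "{..<N}"] by simp
  hence DS: "2 * D N = (\<Sum>n<N. \<Sum>m<N. S n m)" for N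
    by (simp add: S_def T_def sum.distrib[symmetric] algebra_simps)
  have Dge: "D N \<ge> \<delta>" if N: "N \<ge> 2" for N
  proof -
    have "(\<Sum>n<2. \<Sum>m<2. S n m) \<le> (\<Sum>n<2. \<Sum>m<N. S n m)"
      using N Snn by (intro sum_mono sum_mono2) auto
    also have "\<dots> \<le> (\<Sum>n<N. \<Sum>m<N. S n m)"
      using N Snn by (intro sum_mono2 sum_nonneg) auto
    finally have "(\<Sum>n<2. \<Sum>m<2. S n m) \<le> 2 * D N" using DS by simp
    moreover have "(\<Sum>n<2. \<Sum>m<2. S n m) = 2 * \<delta>"
      by (simp add: S_def \<delta>_def numeral_2_eq_2 algebra_simps)
    ultimately show ?thesis by simp
  qed
  have lim: "D \<longlonglongrightarrow> (\<Sum>n. w n * h n * y^n) * (\<Sum>n. w n * x^n) - (\<Sum>n. w n * h n * x^n) * (\<Sum>n. w n * y^n)"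
    unfolding D_def
    by (intro tendsto_intros summable_LIMSEQ sF sH)
  have "\<delta> \<le> (\<Sum>n. w n * h n * y^n) * (\<Sum>n. w n * x^n) - (\<Sum>n. w n * h n * x^n) * (\<Sum>n. w n * y^n)"
    by (rule LIMSEQ_le_const[OF lim]) (use Dge in auto)
  with \<delta> show ?thesis by simp
qed

lemma frac_lt:
  fixes u v p q :: real
  assumes "0 < p" "0 < q" "u * q < v * p"
  shows "u / p < v / q"
  using assms by (simp add: divide_simps)

lemma mid_iff:
  fixes L U :: "real \<Rightarrow> real \<Rightarrow> real"
  assumes "\<And>x y. P x \<Longrightarrow> P y \<Longrightarrow> x < y \<Longrightarrow> L x y < U x y"
    and "\<And>x y. L x y = L y x" "\<And>x y. U x y = U y x" "\<And>x. P x \<Longrightarrow> L x x = U x x"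
    and "P x" "P y"
  shows "L x y \<le> U x y \<and> (L x y = U x y \<longleftrightarrow> x = y)"
  using assms by (metis less_eq_real_def linorder_neqE_linordered_idom order_less_irrefl)

context
  fixes c k :: real
  assumes c: "c < 0" and k: "k > 0"
begin

private abbreviation "B \<equiv> bcoef c k"
private abbreviation "a \<equiv> - c / 4"

lemma a_pos: "a > 0" using c by simp

lemma b_pos: "bcoef c k n > 0"
  unfolding bcoef_def using c k by (intro divide_pos_pos mult_pos_pos pochhammer_pos) auto

lemma b_0: "bcoef c k 0 = 1" by (simp add: bcoef_def)

lemma b_Suc: "bcoef c k (Suc n) = bcoef c k n * a / ((k + n) * (Suc n))"
  unfolding bcoef_def using k
  by (simp add: pochhammer_Suc field_simps)

lemma diffs_b: "diffs (bcoef c k) n = bcoef c k n * a / (k + n)"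
proof -
  have "k + real n \<noteq> 0" "(1 + real n) \<noteq> 0" using k by linarith+
  have "real (Suc n) * (B n * a / ((k + n) * real (Suc n))) = B n * a / (k + n)"
    by (simp del: of_nat_Suc)
  then show ?thesis unfolding diffs_def b_Suc by simp
qed

lemma b_summable: "summable (\<lambda>n. bcoef c k n * z ^ n)"
proof (rule summable_ratio_test[where c="1/2" and N="nat \<lceil>2 * a * \<bar>z\<bar> / k\<rceil>"])
  fix n assume n: "nat \<lceil>2 * a * \<bar>z\<bar> / k\<rceil> \<le> n"
  have "2 * a * \<bar>z\<bar> / k \<le> n" using n by linarith
  hence h1: "2 * a * \<bar>z\<bar> \<le> n * k" using k by (simp add: field_simps)
  have "(n+1) * k \<le> (k + n) * Suc n" using k by (simp add: algebra_simps)
  moreover have "(k + real n) * real (Suc n) = k + real n + k * real n + real n * real n" by (simp add: algebra_simps)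
  moreover have "0 \<le> real n * real n" "0 \<le> real n" "real n * k = k * real n" by simp_all
  ultimately have h2: "2 * a * \<bar>z\<bar> \<le> (k + n) * Suc n" using h1 k by linarith
  have pos: "(k + n) * Suc n > 0" using k by simp
  have "norm (B (Suc n) * z ^ Suc n) = (B n * \<bar>z\<bar>^n) * (a * \<bar>z\<bar> / ((k + n) * Suc n))"
    using b_pos[of n] b_pos[of "Suc n"] a_pos k
    by (simp add: b_Suc abs_mult power_abs field_simps)
  also have "\<dots> \<le> (B n * \<bar>z\<bar>^n) * (1/2)"
    using h2 pos b_pos[of n] a_pos
    by (intro mult_left_mono) (auto simp: field_simps)
  also have "\<dots> = 1/2 * norm (B n * z ^ n)"
    using b_pos[of n] by (simp add: abs_mult power_abs)
  finally show "norm (B (Suc n) * z ^ Suc n) \<le> 1/2 * norm (B n * z ^ n)" .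
qed simp

lemma d_summable: "summable (\<lambda>n. diffs (bcoef c k) n * z ^ n)"
  by (rule termdiff_converges_all[OF b_summable])

lemma f_deriv: "(gnbessel c k has_real_derivative (\<Sum>n. diffs (bcoef c k) n * x ^ n)) (at x)"
  unfolding gnbessel_def[abs_def] by (rule termdiffs_strong_converges_everywhere[OF b_summable])

lemma f_ge1: "x \<ge> 0 \<Longrightarrow> gnbessel c k x \<ge> 1"
proof -
  assume x: "x \<ge> 0"
  have "sum (\<lambda>n. B n * x ^ n) {0} \<le> (\<Sum>n. B n * x ^ n)"
    by (rule sum_le_suminf[OF b_summable]) (use x in \<open>auto intro!: mult_nonneg_nonneg simp: less_imp_le[OF b_pos]\<close>)
  then show ?thesis by (simp add: gnbessel_def b_0)
qed

lemma xFp_sums: "(\<lambda>n. bcoef c k n * real n * z^n) sums (z * (\<Sum>n. diffs (bcoef c k) n * z ^ n))"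
proof -
  have "(\<lambda>n. z * (diffs B n * z^n)) sums (z * (\<Sum>n. diffs B n * z ^ n))"
    by (intro sums_mult summable_sums d_summable)
  moreover have "(\<lambda>n. z * (diffs B n * z^n)) = (\<lambda>n. B (Suc n) * real (Suc n) * z^(Suc n))"
    by (auto simp: diffs_def algebra_simps)
  ultimately have "(\<lambda>n. (\<lambda>n. B n * real n * z^n) (Suc n)) sums (z * (\<Sum>n. diffs B n * z ^ n))"
    by simp
  then have "(\<lambda>n. B n * real n * z^n) sums (z * (\<Sum>n. diffs B n * z ^ n) + B 0 * real 0 * z^0)"
    by (rule sums_Suc_iff[of "\<lambda>n. B n * real n * z^n", THEN iffD1])
  then show ?thesis by simp
qed

lemma d_pos: "diffs (bcoef c k) n > 0"
proof -
  have "k + real n > 0" using k by linarith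
  moreover have "B n * a > 0" using b_pos[of n] a_pos by (rule mult_pos_pos)
  ultimately show ?thesis unfolding diffs_b by (intro divide_pos_pos)
qed

lemma Q_mono:
  assumes "0 < x" "x < y"
  shows "x * (\<Sum>n. diffs (bcoef c k) n * x ^ n) / gnbessel c k x < y * (\<Sum>n. diffs (bcoef c k) n * y ^ n) / gnbessel c k y"
proof -
  have ch: "(\<Sum>n. B n * real n * x^n) * (\<Sum>n. B n * y^n) < (\<Sum>n. B n * real n * y^n) * (\<Sum>n. B n * x^n)"
    by (rule cheb) (use assms b_pos b_summable xFp_sums in \<open>auto intro: less_imp_le sums_summable\<close>)
  have Fx: "gnbessel c k x \<ge> 1" "gnbessel c k y \<ge> 1" using f_ge1 assms by auto
  have "x * (\<Sum>n. diffs B n * x ^ n) * gnbessel c k y < y * (\<Sum>n. diffs B n * y ^ n) * gnbessel c k x"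
    using ch unfolding xFp_sums[THEN sums_unique, symmetric] gnbessel_def .
  then show ?thesis using Fx by (intro frac_lt) auto
qed

lemma Lmono:
  assumes "0 < x" "x < y"
  shows "(\<Sum>n. diffs (bcoef c k) n * y ^ n) / gnbessel c k y < (\<Sum>n. diffs (bcoef c k) n * x ^ n) / gnbessel c k x"
proof -
  have eq: "(\<lambda>n. B n * (- 1 / (k + real n)) * z^n) = (\<lambda>n. (- 1 / a) * (diffs B n * z^n))" for z
  proof (rule ext)
    fix n
    have "k + real n > 0" using k by linarith
    then show "B n * (- 1 / (k + real n)) * z^n = (- 1 / a) * (diffs B n * z^n)"
      using a_pos by (simp add: diffs_b field_simps)
  qed
  have sH: "summable (\<lambda>n. B n * (- 1 / (k + real n)) * z^n)" for z
    unfolding eq by (intro summable_mult d_summable)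
  have sv: "(\<Sum>n. B n * (- 1 / (k + real n)) * z^n) = (- 1 / a) * (\<Sum>n. diffs B n * z^n)" for z
    unfolding eq by (intro suminf_mult d_summable)
  have ch: "(\<Sum>n. B n * (- 1 / (k + real n)) * x^n) * (\<Sum>n. B n * y^n) < (\<Sum>n. B n * (- 1 / (k + real n)) * y^n) * (\<Sum>n. B n * x^n)"
  proof (rule cheb)
    show "\<And>m n. m \<le> n \<Longrightarrow> - 1 / (k + real m) \<le> - 1 / (k + real n)"
      using k by (auto simp: divide_simps)
    show "- 1 / (k + real 0) < - 1 / (k + real 1)" using k by (auto simp: divide_simps)
  qed (use assms b_pos b_summable sH in \<open>auto intro: less_imp_le\<close>)
  have Fx: "gnbessel c k x \<ge> 1" "gnbessel c k y \<ge> 1" using f_ge1 assms by auto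
  from ch have ineq: "(- 1 / a) * ((\<Sum>n. diffs B n * x^n) * gnbessel c k y) < (- 1 / a) * ((\<Sum>n. diffs B n * y^n) * gnbessel c k x)"
    unfolding sv gnbessel_def by (simp only: mult.assoc)
  have neg: "- 1 / a < 0" using a_pos by simp
  from ineq have "(\<Sum>n. diffs B n * y^n) * gnbessel c k x < (\<Sum>n. diffs B n * x^n) * gnbessel c k y"
    by (rule mult_less_cancel_left_neg[OF neg, THEN iffD1])
  then show ?thesis using Fx by (intro frac_lt) auto
qed

lemma Fp_mono:
  assumes "0 \<le> x" "x < y"
  shows "(\<Sum>n. diffs (bcoef c k) n * x ^ n) < (\<Sum>n. diffs (bcoef c k) n * y ^ n)"
proof -
  have s: "summable (\<lambda>n. diffs B n * y ^ n - diffs B n * x ^ n)"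
    by (intro summable_diff d_summable)
  have "sum (\<lambda>n. diffs B n * y ^ n - diffs B n * x ^ n) {1} \<le> (\<Sum>n. diffs B n * y ^ n - diffs B n * x ^ n)"
  proof (rule sum_le_suminf[OF s])
    fix n :: nat
    have "x ^ n \<le> y ^ n" using assms by (intro power_mono) auto
    moreover have "diffs B n > 0" by (rule d_pos)
    ultimately show "0 \<le> diffs B n * y ^ n - diffs B n * x ^ n"
      by (simp add: right_diff_distrib[symmetric])
  qed simp
  moreover have "sum (\<lambda>n. diffs B n * y ^ n - diffs B n * x ^ n) {1} = diffs B 1 * (y - x)"
    by (simp add: right_diff_distrib)
  moreover have "diffs B 1 * (y - x) > 0" using d_pos[of 1] assms by (intro mult_pos_pos) auto
  ultimately have "0 < (\<Sum>n. diffs B n * y ^ n - diffs B n * x ^ n)"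
    by linarith
  then show ?thesis using suminf_diff[OF d_summable d_summable, of y x] by simp
qed

lemma part3:
  "convex_on {0<..} (gnbessel c k) \<and>
     (\<forall>x>0. \<forall>y>0. gnbessel c k ((x + y) / 2) \<le> (gnbessel c k x + gnbessel c k y) / 2 \<and>
        (gnbessel c k ((x + y) / 2) = (gnbessel c k x + gnbessel c k y) / 2 \<longleftrightarrow> x = y))"
proof -
  have conn: "connected {0::real<..}" by simp
  note sc = strict_convex_deriv[OF conn f_deriv Fp_mono]
  have 1: "convex_on {0<..} (gnbessel c k)" by (rule sc(1)) auto
  have 2: "gnbessel c k ((x + y) / 2) \<le> (gnbessel c k x + gnbessel c k y) / 2 \<and>
        (gnbessel c k ((x + y) / 2) = (gnbessel c k x + gnbessel c k y) / 2 \<longleftrightarrow> x = y)"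
    if "x > 0" "y > 0" for x y
  proof (rule mid_iff[where P="\<lambda>x. x > 0"])
    fix x y :: real assume "x > 0" "y > 0" "x < y"
    then have "2 * gnbessel c k ((x + y) / 2) < gnbessel c k x + gnbessel c k y"
      by (intro sc(2)) auto
    then show "gnbessel c k ((x + y) / 2) < (gnbessel c k x + gnbessel c k y) / 2" by simp
  qed (use that in \<open>auto simp: add.commute\<close>)
  from 1 2 show ?thesis by blast
qed

lemma part2:
  "concave_on {0<..} (\<lambda>x. ln (gnbessel c k x)) \<and>
     (\<forall>x>0. \<forall>y>0. sqrt (gnbessel c k x * gnbessel c k y) \<le> gnbessel c k ((x + y) / 2) \<and>
        (sqrt (gnbessel c k x * gnbessel c k y) = gnbessel c k ((x + y) / 2) \<longleftrightarrow> x = y))"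
proof -
  have conn: "connected {0::real<..}" by simp
  have Fpos: "gnbessel c k x > 0" if "x \<ge> 0" for x using f_ge1[OF that] by simp
  have d: "((\<lambda>x. - ln (gnbessel c k x)) has_real_derivative
      - ((\<Sum>n. diffs B n * x ^ n) / gnbessel c k x)) (at x)" if "x \<in> {0<..}" for x
  proof -
    have "((\<lambda>x. ln (gnbessel c k x)) has_real_derivative
      inverse (gnbessel c k x) * (\<Sum>n. diffs B n * x ^ n)) (at x)"
      by (rule DERIV_chain2[OF DERIV_ln f_deriv]) (use Fpos that in auto)
    from DERIV_minus[OF this] show ?thesis by (simp add: divide_inverse mult.commute)
  qed
  have m: "- ((\<Sum>n. diffs B n * x ^ n) / gnbessel c k x) < - ((\<Sum>n. diffs B n * y ^ n) / gnbessel c k y)"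
    if "x \<in> {0<..}" "y \<in> {0<..}" "x < y" for x y
    using Lmono[of x y] that by simp
  note sc = strict_convex_deriv[OF conn d m]
  have 1: "concave_on {0<..} (\<lambda>x. ln (gnbessel c k x))" unfolding concave_on_def by (rule sc(1))
  have 2: "sqrt (gnbessel c k x * gnbessel c k y) \<le> gnbessel c k ((x + y) / 2) \<and>
        (sqrt (gnbessel c k x * gnbessel c k y) = gnbessel c k ((x + y) / 2) \<longleftrightarrow> x = y)"
    if "x > 0" "y > 0" for x y
  proof (rule mid_iff[where P="\<lambda>x. x > 0"])
    fix x y :: real assume xy: "x > 0" "y > 0" "x < y"
    then have "2 * - ln (gnbessel c k ((x + y) / 2)) < - ln (gnbessel c k x) + - ln (gnbessel c k y)"
      by (intro sc(2)) auto
    moreover have "gnbessel c k x > 0" "gnbessel c k y > 0" "gnbessel c k ((x + y) / 2) > 0"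
      using Fpos xy by auto
    ultimately have "ln (gnbessel c k x * gnbessel c k y) < ln (gnbessel c k ((x + y) / 2) ^ 2)"
      by (simp add: ln_mult ln_realpow)
    then have "gnbessel c k x * gnbessel c k y < gnbessel c k ((x + y) / 2) ^ 2"
      using Fpos[of x] Fpos[of y] Fpos[of "(x+y)/2"] xy by (subst (asm) ln_less_cancel_iff) auto
    then show "sqrt (gnbessel c k x * gnbessel c k y) < gnbessel c k ((x + y) / 2)"
      using Fpos[of "(x+y)/2"] xy by (intro real_less_lsqrt) auto
  qed (use that Fpos in \<open>auto simp: add.commute mult.commute less_imp_le\<close>)
  from 1 2 show ?thesis by blast
qed

lemma part1:
  assumes R: "R > 0"
  shows "convex_on {0<..} (\<lambda>t. ln (gnbessel c k (R * exp (- t)))) \<and>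
     (\<forall>x>0. \<forall>y>0. gnbessel c k (sqrt (x * y)) \<le> sqrt (gnbessel c k x * gnbessel c k y) \<and>
        (gnbessel c k (sqrt (x * y)) = sqrt (gnbessel c k x * gnbessel c k y) \<longleftrightarrow> x = y))"
proof -
  define F where "F = gnbessel c k"
  define Fp where "Fp z = (\<Sum>n. diffs B n * z ^ n)" for z
  define Q where "Q z = z * Fp z / F z" for z
  have Fpos: "F x > 0" if "x \<ge> 0" for x using f_ge1[OF that] by (simp add: F_def)
  have Qm: "Q x < Q y" if "0 < x" "x < y" for x y
    using Q_mono[OF that] by (simp add: Q_def F_def Fp_def)
  have fd: "(F has_real_derivative Fp x) (at x)" for x
    unfolding F_def Fp_def by (rule f_deriv)
  have lnd: "((\<lambda>t. ln (F (h t))) has_real_derivative Q (h t) * hd) (at t)"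
    if "(h has_real_derivative h t * hd) (at t)" "h t > 0" for h hd t
  proof -
    have "((\<lambda>t. ln (F (h t))) has_real_derivative inverse (F (h t)) * (Fp (h t) * (h t * hd))) (at t)"
      by (rule DERIV_chain2[OF DERIV_ln DERIV_chain2[OF fd that(1)]]) (use Fpos that in auto)
    then show ?thesis by (rule DERIV_cong) (simp add: Q_def divide_inverse)
  qed
  have conn: "connected {0::real<..}" by simp
  have d1: "((\<lambda>t. ln (F (R * exp (- t)))) has_real_derivative Q (R * exp (- t)) * (-1)) (at t)" for t
  proof (rule lnd[where h="\<lambda>t. R * exp (- t)"])
    show "((\<lambda>t. R * exp (- t)) has_real_derivative R * exp (- t) * - 1) (at t)"
      by (auto intro!: derivative_eq_intros)
  qed (use R in simp)
  have m1: "Q (R * exp (- x)) * (-1) < Q (R * exp (- y)) * (-1)" if "x < y" for x y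
  proof -
    have "R * exp (- y) < R * exp (- x)" using R that by simp
    then have "Q (R * exp (- y)) < Q (R * exp (- x))" using R by (intro Qm) auto
    then show ?thesis by simp
  qed
  have 1: "convex_on {0<..} (\<lambda>t. ln (F (R * exp (- t))))"
    by (rule strict_convex_deriv(1)[OF conn d1 m1])
  have d2: "((\<lambda>t. ln (F (exp t))) has_real_derivative Q (exp t) * 1) (at t)" for t
  proof (rule lnd[where h="\<lambda>t. exp t"])
    show "(exp has_real_derivative exp t * 1) (at t)"
      by (auto intro!: derivative_eq_intros)
  qed simp
  have m2: "Q (exp x) * 1 < Q (exp y) * 1" if "x < y" for x y
    using that by (simp add: Qm)
  have sc2: "2 * ln (F (exp ((x + y) / 2))) < ln (F (exp x)) + ln (F (exp y))" if "x < y" for x y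
    by (rule strict_convex_deriv(2)[OF _ d2 m2]) (use that in auto)
  have sq: "exp ((ln x + ln y) / 2) = sqrt (x * y)" if "x > 0" "y > 0" for x y
  proof -
    have "(exp ((ln x + ln y) / 2))\<^sup>2 = x * y"
      using that by (simp add: power2_eq_square exp_add[symmetric] exp_add)
    then show ?thesis by (intro real_sqrt_unique[symmetric]) auto
  qed
  have 2: "F (sqrt (x * y)) \<le> sqrt (F x * F y) \<and> (F (sqrt (x * y)) = sqrt (F x * F y) \<longleftrightarrow> x = y)"
    if "x > 0" "y > 0" for x y
  proof (rule mid_iff[where P="\<lambda>x. x > 0"])
    fix x y :: real assume xy: "x > 0" "y > 0" "x < y"
    have "2 * ln (F (exp ((ln x + ln y) / 2))) < ln (F (exp (ln x))) + ln (F (exp (ln y)))"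
      using xy by (intro sc2) auto
    then have "2 * ln (F (sqrt (x * y))) < ln (F x) + ln (F y)" using xy sq by simp
    moreover have "F x > 0" "F y > 0" "F (sqrt (x * y)) > 0" using Fpos xy by auto
    ultimately have "ln (F (sqrt (x * y)) ^ 2) < ln (F x * F y)"
      by (simp add: ln_mult ln_realpow)
    then have "F (sqrt (x * y)) ^ 2 < F x * F y"
      using Fpos[of x] Fpos[of y] Fpos[of "sqrt (x * y)"] xy by (subst (asm) ln_less_cancel_iff) auto
    then show "F (sqrt (x * y)) < sqrt (F x * F y)" by (rule real_less_rsqrt)
  qed (use that Fpos in \<open>auto simp: mult.commute less_imp_le\<close>)
  from 1 2 show ?thesis unfolding F_def by blast
qed

lemma part4:
  assumes R: "R > 0" and kR: "k > - 1 - c * R / 4"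
  shows "concave_on {0<..} (\<lambda>t. gnbessel c k (R * (1 - exp (- t)))) \<and>
      (\<forall>x\<in>{0<..<R}. \<forall>y\<in>{0<..<R}.
         (gnbessel c k x + gnbessel c k y) / 2 \<le> gnbessel c k (R - sqrt ((R - x) * (R - y))) \<and>
         ((gnbessel c k x + gnbessel c k y) / 2 = gnbessel c k (R - sqrt ((R - x) * (R - y))) \<longleftrightarrow> x = y))"
proof -
  define F where "F = gnbessel c k"
  define Fp where "Fp z = (\<Sum>n. diffs B n * z ^ n)" for z
  define E where "E n = R * diffs B n - (if n = 0 then 0 else diffs B (n - 1))" for n
  have fd: "(F has_real_derivative Fp x) (at x)" for x
    unfolding F_def Fp_def by (rule f_deriv)
  have Psums: "(\<lambda>n. E n * z^n) sums ((R - z) * Fp z)" for z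
  proof -
    have s1: "(\<lambda>n. R * (diffs B n * z^n)) sums (R * Fp z)"
      unfolding Fp_def by (intro sums_mult summable_sums d_summable)
    have "(\<lambda>n. z * (diffs B n * z^n)) sums (z * Fp z)"
      unfolding Fp_def by (intro sums_mult summable_sums d_summable)
    then have "(\<lambda>n. (\<lambda>n. (if n = 0 then 0 else diffs B (n - 1)) * z^n) (Suc n)) sums (z * Fp z)"
      by (simp add: algebra_simps)
    then have "(\<lambda>n. (if n = 0 then 0 else diffs B (n - 1)) * z^n) sums (z * Fp z + (if 0 = (0::nat) then 0 else diffs B (0 - 1)) * z^0)"
      by (rule sums_Suc_iff[THEN iffD1])
    then have s2: "(\<lambda>n. (if n = 0 then 0 else diffs B (n - 1)) * z^n) sums (z * Fp z)" by simp
    have "(\<lambda>n. R * (diffs B n * z^n) - (if n = 0 then 0 else diffs B (n - 1)) * z^n) sums (R * Fp z - z * Fp z)"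
      by (rule sums_diff[OF s1 s2])
    moreover have "(\<lambda>n. R * (diffs B n * z^n) - (if n = 0 then 0 else diffs B (n - 1)) * z^n) = (\<lambda>n. E n * z^n)"
      by (auto simp: E_def algebra_simps)
    ultimately show ?thesis by (simp add: algebra_simps)
  qed
  have Eneg: "E n < 0" if "n \<ge> 1" for n
  proof -
    define m where "m = n - 1"
    have m: "n = Suc m" using that unfolding m_def by simp
    have dn: "diffs B (n - 1) = real n * B n" using m by (simp add: diffs_def)
    have kn: "k + real n > 0" using k by linarith
    have h1: "R * a < k + 1" using kR by (simp add: algebra_simps)
    have n1: "real n \<ge> 1" using that by simp
    have h2: "k + real n \<le> (k + real n) * real n"
      using mult_left_mono[of 1 "real n" "k + real n"] n1 kn by simp
    have "real n * (k + real n) = (k + real n) * real n" by (rule mult.commute)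
    then have "R * a < real n * (k + real n)" using h1 h2 n1 by linarith
    then have "R * a / (k + real n) < real n" by (rule pos_divide_less_eq[OF kn, THEN iffD2])
    then have lt: "B n * (R * a / (k + real n)) < B n * real n" by (rule mult_strict_left_mono[OF _ b_pos])
    have "E n = R * diffs B n - diffs B (n - 1)" using that by (simp add: E_def)
    also have "\<dots> = R * (B n * a / (k + real n)) - real n * B n" by (simp only: dn diffs_b[of n])
    finally have E: "E n = R * (B n * a / (k + real n)) - real n * B n" .
    have "R * (B n * a / (k + real n)) = B n * (R * a / (k + real n))" by simp
    moreover have "real n * B n = B n * real n" by (rule mult.commute)
    ultimately show ?thesis using lt E by linarith
  qed
  have Pm: "(R - y) * Fp y < (R - x) * Fp x" if xy: "0 \<le> x" "x < y" for x y
  proof -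
    have s: "summable (\<lambda>n. E n * x ^ n - E n * y ^ n)"
      using Psums by (intro summable_diff) (auto intro: sums_summable)
    have "sum (\<lambda>n. E n * x ^ n - E n * y ^ n) {1} \<le> (\<Sum>n. E n * x ^ n - E n * y ^ n)"
    proof (rule sum_le_suminf[OF s])
      fix n :: nat
      show "0 \<le> E n * x ^ n - E n * y ^ n"
      proof (cases "n = 0")
        case False
        have "x ^ n \<le> y ^ n" using xy by (intro power_mono) auto
        then have "E n * y ^ n \<le> E n * x ^ n" using Eneg[of n] False by (intro mult_left_mono_neg) auto
        then show ?thesis by simp
      qed simp
    qed simp
    moreover have "sum (\<lambda>n. E n * x ^ n - E n * y ^ n) {1} = (- E 1) * (y - x)"
      by (simp add: algebra_simps)
    moreover have "(- E 1) * (y - x) > 0" using Eneg[of 1] xy by (intro mult_pos_pos) auto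
    ultimately have "0 < (\<Sum>n. E n * x ^ n - E n * y ^ n)" by linarith
    also have "\<dots> = (R - x) * Fp x - (R - y) * Fp y"
      using suminf_diff[of "\<lambda>n. E n * x ^ n" "\<lambda>n. E n * y ^ n"] Psums[of x] Psums[of y]
      by (auto simp: sums_iff)
    finally show ?thesis by simp
  qed
  define u where "u t = R * (1 - exp (- t))" for t
  have d: "((\<lambda>t. - F (u t)) has_real_derivative - ((R - u t) * Fp (u t))) (at t)" if "t \<in> {0<..}" for t
  proof -
    have "(u has_real_derivative R * exp (- t)) (at t)"
      unfolding u_def[abs_def] by (auto intro!: derivative_eq_intros)
    from DERIV_minus[OF DERIV_chain2[OF fd this]] show ?thesis
      by (rule DERIV_cong) (simp add: u_def algebra_simps)
  qed
  have m: "- ((R - u x) * Fp (u x)) < - ((R - u y) * Fp (u y))" if "x \<in> {0<..}" "y \<in> {0<..}" "x < y" for x y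
  proof -
    have "0 \<le> u x" "u x < u y" using that R by (auto simp: u_def)
    from Pm[OF this] show ?thesis by simp
  qed
  have conn: "connected {0::real<..}" by simp
  note sc = strict_convex_deriv[OF conn d m]
  have 1: "concave_on {0<..} (\<lambda>t. F (u t))" unfolding concave_on_def by (rule sc(1))
  define \<sigma> where "\<sigma> x = ln (R / (R - x))" for x
  have \<sigma>: "\<sigma> x > 0" "exp (- \<sigma> x) = (R - x) / R" "u (\<sigma> x) = x" if "x \<in> {0<..<R}" for x
  proof -
    show "\<sigma> x > 0" using that R by (simp add: \<sigma>_def divide_simps)
    show e: "exp (- \<sigma> x) = (R - x) / R" using that R by (simp add: \<sigma>_def exp_minus)
    show "u (\<sigma> x) = x" using R by (simp add: u_def e field_simps)
  qed
  have \<sigma>m: "\<sigma> x < \<sigma> y" if "x \<in> {0<..<R}" "y \<in> {0<..<R}" "x < y" for x y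
    using that R by (simp add: \<sigma>_def divide_simps)
  have mid: "u ((\<sigma> x + \<sigma> y) / 2) = R - sqrt ((R - x) * (R - y))" if "x \<in> {0<..<R}" "y \<in> {0<..<R}" for x y
  proof -
    have "(R * exp (- ((\<sigma> x + \<sigma> y) / 2)))\<^sup>2 = R\<^sup>2 * (exp (- \<sigma> x) * exp (- \<sigma> y))"
      by (simp add: power_mult_distrib power2_eq_square exp_add[symmetric])
    also have "\<dots> = (R - x) * (R - y)" using \<sigma>[OF that(1)] \<sigma>[OF that(2)] R
      by (simp add: power2_eq_square)
    finally have "sqrt ((R - x) * (R - y)) = R * exp (- ((\<sigma> x + \<sigma> y) / 2))"
      using R by (intro real_sqrt_unique) auto
    then show ?thesis by (simp add: u_def algebra_simps)
  qed
  have 2: "(F x + F y) / 2 \<le> F (R - sqrt ((R - x) * (R - y))) \<and>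
         ((F x + F y) / 2 = F (R - sqrt ((R - x) * (R - y))) \<longleftrightarrow> x = y)"
    if "x \<in> {0<..<R}" "y \<in> {0<..<R}" for x y
  proof (rule mid_iff[where P="\<lambda>x. x \<in> {0<..<R}"])
    fix x y :: real assume xy: "x \<in> {0<..<R}" "y \<in> {0<..<R}" "x < y"
    have "2 * - F (u ((\<sigma> x + \<sigma> y) / 2)) < - F (u (\<sigma> x)) + - F (u (\<sigma> y))"
      using xy \<sigma> \<sigma>m by (intro sc(2)) auto
    then show "(F x + F y) / 2 < F (R - sqrt ((R - x) * (R - y)))"
      using xy \<sigma> mid by simp
  next
    fix x :: real assume "x \<in> {0<..<R}"
    then show "(F x + F x) / 2 = F (R - sqrt ((R - x) * (R - x)))" by simp
  qed (use that in \<open>auto simp: mult.commute add.commute\<close>)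
  from 1 2 show ?thesis unfolding F_def u_def by blast
qed

end

theorem theorem3p6:
  fixes c k R :: real
  assumes "c < 0" and "k > 0" and "R > 0"
  defines "f \<equiv> gnbessel c k"
  shows
   "(convex_on {0<..} (\<lambda>t. ln (f (R * exp (- t)))) \<and>
     (\<forall>x>0. \<forall>y>0. f (sqrt (x * y)) \<le> sqrt (f x * f y) \<and>
        (f (sqrt (x * y)) = sqrt (f x * f y) \<longleftrightarrow> x = y)))
  \<and> (concave_on {0<..} (\<lambda>x. ln (f x)) \<and>
     (\<forall>x>0. \<forall>y>0. sqrt (f x * f y) \<le> f ((x + y) / 2) \<and>
        (sqrt (f x * f y) = f ((x + y) / 2) \<longleftrightarrow> x = y)))
  \<and> (convex_on {0<..} f \<and>
     (\<forall>x>0. \<forall>y>0. f ((x + y) / 2) \<le> (f x + f y) / 2 \<and>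
        (f ((x + y) / 2) = (f x + f y) / 2 \<longleftrightarrow> x = y)))
  \<and> (k > - 1 - c * R / 4 \<longrightarrow>
     (concave_on {0<..} (\<lambda>t. f (R * (1 - exp (- t)))) \<and>
      (\<forall>x\<in>{0<..<R}. \<forall>y\<in>{0<..<R}.
         (f x + f y) / 2 \<le> f (R - sqrt ((R - x) * (R - y))) \<and>
         ((f x + f y) / 2 = f (R - sqrt ((R - x) * (R - y))) \<longleftrightarrow> x = y))))"
proof -
  show ?thesis
    unfolding f_def
    using part1[OF assms(1,2,3)] part2[OF assms(1,2)] part3[OF assms(1,2)] part4[OF assms(1,2,3)]
    by blast
qed

end
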